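(* Let $R=\mathbb{F}_q+v\mathbb{F}_q+v^2\mathbb{F}_q$ with $v^3=v$, and let $M$ be an $n\times n$ circulant matrix over $R$. Then $G=(I_n\mid M)$ generates an isodual code, and hence a formally self-dual code, over $R$ (of length $2n$).
   Context: $q$ is a prime power and $R=\mathbb{F}_q[v]/\langle v^3-v\rangle$. A circulant matrix is one in which each row is the cyclic shift one position to the right of the previous row. A linear code of length $N$ over $R$ is an $R$-submodule of $R^N$; $C^\perp=\{x\in R^N:\sum x_iy_i=0\ \forall y\in C\}$. Two codes are equivalent if one is obtained from the other by a permutation of coordinates combined with multiplication of coordinates by units of $R$. $C$ is isodual if $C$ is equivalent to $C^\perp$. For $c\in R^N$ written uniquely as $a_0+va_1+v^2a_2$ with $a_i\in\mathbb{F}_q^N$, the Gray map is $\Psi(c)=(a_0,a_0+a_2,a_1)$ and the Lee weight $w_L(c)$ is the Hamming weight of $\Psi(c)$. $C$ is formally self-dual if $C$ and $C^\perp$ have the same Lee weight enumerator $\sum_c X^{3N-w_L(c)}Y^{w_L(c)}$. *)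

theory Defs
  imports "HOL-Combinatorics.Permutations"
begin

text \<open>An element VR a0 a1 a2 stands for a0 + v a1 + v^2 a2 (unique representation).\<close>

datatype 'a vring = VR 'a 'a 'a

fun c0 :: "'a vring \<Rightarrow> 'a" where "c0 (VR a b c) = a"
fun c1 :: "'a vring \<Rightarrow> 'a" where "c1 (VR a b c) = b"
fun c2 :: "'a vring \<Rightarrow> 'a" where "c2 (VR a b c) = c"

lemma vring_eq_iff: "x = y \<longleftrightarrow> c0 x = c0 y \<and> c1 x = c1 y \<and> c2 x = c2 y"
  by (cases x; cases y) auto

instantiation vring :: (comm_ring_1) comm_ring_1
begin

definition "0 = VR 0 0 0"
definition "1 = VR 1 0 0"
definition "x + y = VR (c0 x + c0 y) (c1 x + c1 y) (c2 x + c2 y)"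
definition "x - y = VR (c0 x - c0 y) (c1 x - c1 y) (c2 x - c2 y)"
definition "- x = VR (- c0 x) (- c1 x) (- c2 x)"
text \<open>Multiplication using v^3 = v (so v^4 = v^2).\<close>
definition "x * y = VR (c0 x * c0 y)
   (c0 x * c1 y + c1 x * c0 y + c1 x * c2 y + c2 x * c1 y)
   (c0 x * c2 y + c2 x * c0 y + c1 x * c1 y + c2 x * c2 y)"

instance
  by standard (simp_all add: vring_eq_iff zero_vring_def one_vring_def plus_vring_def
      minus_vring_def uminus_vring_def times_vring_def algebra_simps)

end

definition vv :: "'a::comm_ring_1 vring" where "vv = VR 0 1 0"

definition vecs :: "nat \<Rightarrow> (nat \<Rightarrow> 'a::comm_ring_1 vring) set" where
  "vecs N = {x. \<forall>i\<ge>N. x i = 0}"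

definition linear_code :: "nat \<Rightarrow> (nat \<Rightarrow> 'a::comm_ring_1 vring) set \<Rightarrow> bool" where
  "linear_code N C \<longleftrightarrow> C \<subseteq> vecs N \<and> (\<lambda>i. 0) \<in> C \<and>
     (\<forall>x\<in>C. \<forall>y\<in>C. (\<lambda>i. x i + y i) \<in> C) \<and>
     (\<forall>r. \<forall>x\<in>C. (\<lambda>i. r * x i) \<in> C)"

definition dual_code :: "nat \<Rightarrow> (nat \<Rightarrow> 'a::comm_ring_1 vring) set \<Rightarrow> (nat \<Rightarrow> 'a vring) set" where
  "dual_code N C = {x \<in> vecs N. \<forall>y\<in>C. (\<Sum>i<N. x i * y i) = 0}"

definition equiv_codes :: "nat \<Rightarrow> (nat \<Rightarrow> 'a::comm_ring_1 vring) set \<Rightarrow> (nat \<Rightarrow> 'a vring) set \<Rightarrow> bool" where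
  "equiv_codes N C D \<longleftrightarrow> (\<exists>\<sigma> u. \<sigma> permutes {..<N} \<and> (\<forall>i<N. u i dvd 1) \<and>
      D = (\<lambda>c. \<lambda>i. if i < N then u i * c (\<sigma> i) else 0) ` C)"

definition isodual :: "nat \<Rightarrow> (nat \<Rightarrow> 'a::comm_ring_1 vring) set \<Rightarrow> bool" where
  "isodual N C \<longleftrightarrow> linear_code N C \<and> equiv_codes N C (dual_code N C)"

text \<open>Lee weight = Hamming weight of the Gray image (a0, a0 + a2, a1).\<close>
definition lee_weight :: "nat \<Rightarrow> (nat \<Rightarrow> 'a::comm_ring_1 vring) \<Rightarrow> nat" where
  "lee_weight N c = card {i. i < N \<and> c0 (c i) \<noteq> 0}
                  + card {i. i < N \<and> c0 (c i) + c2 (c i) \<noteq> 0}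
                  + card {i. i < N \<and> c1 (c i) \<noteq> 0}"

text \<open>Equality of Lee weight enumerators sum_c X^(3N - wL c) Y^(wL c), i.e. equality of
  all their coefficients (the number of codewords of each Lee weight).\<close>
definition formally_self_dual :: "nat \<Rightarrow> (nat \<Rightarrow> 'a::comm_ring_1 vring) set \<Rightarrow> bool" where
  "formally_self_dual N C \<longleftrightarrow>
     (\<forall>w. card {c \<in> C. lee_weight N c = w} = card {c \<in> dual_code N C. lee_weight N c = w})"

definition circulant :: "nat \<Rightarrow> (nat \<Rightarrow> nat \<Rightarrow> 'a) \<Rightarrow> bool" where
  "circulant n M \<longleftrightarrow> (\<forall>i j. i + 1 < n \<and> j < n \<longrightarrow> M (i + 1) ((j + 1) mod n) = M i j)"

text \<open>The matrix (I_n | M), n rows and 2n columns.\<close>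
definition id_aug :: "nat \<Rightarrow> (nat \<Rightarrow> nat \<Rightarrow> 'a::comm_ring_1) \<Rightarrow> nat \<Rightarrow> nat \<Rightarrow> 'a" where
  "id_aug n M i j = (if j < n then (if i = j then 1 else 0) else M i (j - n))"

definition gen_code :: "nat \<Rightarrow> nat \<Rightarrow> (nat \<Rightarrow> nat \<Rightarrow> 'a::comm_ring_1 vring) \<Rightarrow> (nat \<Rightarrow> 'a vring) set" where
  "gen_code k N G = {(\<lambda>j. if j < N then (\<Sum>i<k. x i * G i j) else 0) | x. True}"

end

theory Submission imports Defs begin

lemma circ_formula:
  assumes "circulant n M" "i < n" "j < n"
  shows "M i j = M 0 ((j + n - i) mod n)"
  using assms(2,3)
proof (induction i arbitrary: j)
  case 0 thus ?case by simp
next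
  case (Suc i)
  define j' where "j' = (j + n - 1) mod n"
  have j'n: "j' < n" using Suc by (simp add: j'_def)
  have jj: "(j' + 1) mod n = j"
  proof (cases j)
    case 0 thus ?thesis using Suc by (simp add: j'_def)
  next
    case (Suc k) thus ?thesis using Suc.prems by (simp add: j'_def)
  qed
  have "M (Suc i) j = M i j'"
    using assms(1) Suc.prems j'n jj unfolding circulant_def by (metis Suc_eq_plus1)
  also have "\<dots> = M 0 ((j' + n - i) mod n)" using Suc j'n by simp
  also have "(j' + n - i) mod n = (j + n - Suc i) mod n"
  proof -
    have "int ((j' + n - i) mod n) = (int j' + int n - int i) mod int n"
      using Suc.prems by (simp add: zmod_int of_nat_diff)
    also have "\<dots> = ((int j + int n - 1) mod int n + int n - int i) mod int n"
      unfolding j'_def using Suc.prems by (simp add: zmod_int of_nat_diff)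
    also have "\<dots> = (int j + int n - int (Suc i)) mod int n"
    proof -
      have "((int j + int n - 1) mod int n + int n - int i) mod int n
          = ((int j + int n - 1) mod int n + (int n - int i)) mod int n" by (simp add: algebra_simps)
      also have "\<dots> = ((int j + int n - 1) + (int n - int i)) mod int n" by (rule mod_add_left_eq)
      also have "\<dots> = ((int j + int n - int (Suc i)) + int n) mod int n" by (simp add: algebra_simps)
      also have "\<dots> = (int j + int n - int (Suc i)) mod int n" by (rule mod_add_self2)
      finally show ?thesis .
    qed
    also have "\<dots> = int ((j + n - Suc i) mod n)"
      using Suc.prems by (simp add: zmod_int of_nat_diff)
    finally show ?thesis by simp
  qed
  finally show ?case .
qed

definition rho :: "nat \<Rightarrow> nat \<Rightarrow> nat" where "rho n k = (n - k) mod n"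

lemma rho_lt: "k < n \<Longrightarrow> rho n k < n" by (simp add: rho_def)
lemma rho_rho: "k < n \<Longrightarrow> rho n (rho n k) = k"
  by (cases "k = 0") (auto simp: rho_def)

lemma circ_sym:
  assumes "circulant n M" "i < n" "k < n"
  shows "M i (rho n k) = M k (rho n i)"
proof -
  have "(rho n k + n - i) mod n = (rho n i + n - k) mod n"
  proof -
    have "int ((rho n k + n - i) mod n) = ((- int k) mod int n + (int n - int i)) mod int n"
      using assms by (simp add: rho_def zmod_int of_nat_diff algebra_simps)
    also have "\<dots> = ((- int k) + (int n - int i)) mod int n" by (rule mod_add_left_eq)
    also have "\<dots> = (int n + (- int k - int i)) mod int n"
      by (rule arg_cong[where f="\<lambda>x. x mod int n"]) simp
    also have "\<dots> = (- int k - int i) mod int n" by (rule mod_add_self1)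
    finally have "int ((rho n k + n - i) mod n) = (- int k - int i) mod int n" .
    moreover have "int ((rho n i + n - k) mod n) = ((- int i) mod int n + (int n - int k)) mod int n"
      using assms by (simp add: rho_def zmod_int of_nat_diff algebra_simps)
    moreover have "((- int i) mod int n + (int n - int k)) mod int n = ((- int i) + (int n - int k)) mod int n" by (rule mod_add_left_eq)
    moreover have "((- int i) + (int n - int k)) mod int n = (int n + (- int k - int i)) mod int n"
      by (rule arg_cong[where f="\<lambda>x. x mod int n"]) simp
    moreover have "(int n + (- int k - int i)) mod int n = (- int k - int i) mod int n" by (rule mod_add_self1)
    ultimately show ?thesis by simp
  qed
  thus ?thesis using circ_formula[OF assms(1)] assms rho_lt by metis
qed

lemma rho_bij: "bij_betw (rho n) {..<n} {..<n}"
  by (rule bij_betwI[where g="rho n"]) (auto simp: rho_lt rho_rho)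

lemma sum_rho: "(\<Sum>j<n. f (rho n j)) = (\<Sum>j<n. (f j :: 'b::comm_monoid_add))"
  using sum.reindex_bij_betw[OF rho_bij, of f] by simp

lemma sum_split: "(\<Sum>i<n+(m::nat). f i) = (\<Sum>i<n. f i) + (\<Sum>i<m. (f (n+i) :: 'b::comm_monoid_add))"
  by (induction m) (simp_all add: add_ac)

definition cw :: "nat \<Rightarrow> (nat \<Rightarrow> nat \<Rightarrow> 'a::comm_ring_1 vring) \<Rightarrow> (nat \<Rightarrow> 'a vring) \<Rightarrow> nat \<Rightarrow> 'a vring" where
  "cw n M a j = (if j < n then a j else if j < 2*n then (\<Sum>i<n. a i * M i (j-n)) else 0)"

lemma gen_eq: "gen_code n (2*n) (id_aug n M) = range (cw n M)"
proof -
  have "(\<lambda>j. if j < 2*n then (\<Sum>i<n. x i * id_aug n M i j) else 0) = cw n M x" for x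
  proof
    fix j
    show "(if j < 2*n then (\<Sum>i<n. x i * id_aug n M i j) else 0) = cw n M x j"
    proof (cases "j < n")
      case True
      have "(\<Sum>i<n. x i * id_aug n M i j) = (\<Sum>i<n. if i = j then x i else 0)"
        by (rule sum.cong) (auto simp: id_aug_def True)
      thus ?thesis using True by (simp add: cw_def)
    qed (auto simp: cw_def id_aug_def)
  qed
  thus ?thesis unfolding gen_code_def by auto
qed

lemma ip_formula:
  "(\<Sum>i<2*n. y i * cw n M a i) = (\<Sum>l<n. a l * (y l + (\<Sum>j<n. M l j * y (n+j))))"
proof -
  have "(\<Sum>i<2*n. y i * cw n M a i) = (\<Sum>i<n. y i * cw n M a i) + (\<Sum>j<n. y (n+j) * cw n M a (n+j))"
    using sum_split[of "\<lambda>i. y i * cw n M a i" n n] by (simp add: mult_2)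
  also have "(\<Sum>i<n. y i * cw n M a i) = (\<Sum>l<n. a l * y l)"
    by (rule sum.cong) (auto simp: cw_def mult.commute)
  also have "(\<Sum>j<n. y (n+j) * cw n M a (n+j)) = (\<Sum>j<n. \<Sum>l<n. a l * (M l j * y (n+j)))"
    by (rule sum.cong) (auto simp: cw_def sum_distrib_left mult_ac)
  also have "\<dots> = (\<Sum>l<n. \<Sum>j<n. a l * (M l j * y (n+j)))" by (rule sum.swap)
  also have "\<dots> = (\<Sum>l<n. a l * (\<Sum>j<n. M l j * y (n+j)))" by (simp add: sum_distrib_left)
  finally show ?thesis by (simp add: distrib_left sum.distrib)
qed

lemma dual_char:
  "dual_code (2*n) (range (cw n M)) = {y \<in> vecs (2*n). \<forall>k<n. y k + (\<Sum>j<n. M k j * y (n+j)) = 0}"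
proof (intro set_eqI iffI)
  fix y assume y: "y \<in> dual_code (2*n) (range (cw n M))"
  hence v: "y \<in> vecs (2*n)" by (simp add: dual_code_def)
  have "y k + (\<Sum>j<n. M k j * y (n+j)) = 0" if k: "k < n" for k
  proof -
    have "0 = (\<Sum>i<2*n. y i * cw n M (\<lambda>l. if l = k then 1 else 0) i)"
      using y by (simp add: dual_code_def)
    also have "\<dots> = (\<Sum>l<n. if l = k then (y l + (\<Sum>j<n. M l j * y (n+j))) else 0)"
      unfolding ip_formula by (rule sum.cong) auto
    also have "\<dots> = y k + (\<Sum>j<n. M k j * y (n+j))" using k by simp
    finally show ?thesis by simp
  qed
  with v show "y \<in> {y \<in> vecs (2*n). \<forall>k<n. y k + (\<Sum>j<n. M k j * y (n+j)) = 0}" by blast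
next
  fix y assume "y \<in> {y \<in> vecs (2*n). \<forall>k<n. y k + (\<Sum>j<n. M k j * y (n+j)) = 0}"
  hence v: "y \<in> vecs (2*n)" and c: "\<And>k. k<n \<Longrightarrow> y k + (\<Sum>j<n. M k j * y (n+j)) = 0" by auto
  have "(\<Sum>i<2*n. y i * z i) = 0" if "z \<in> range (cw n M)" for z
    using that by (auto simp: ip_formula c)
  with v show "y \<in> dual_code (2*n) (range (cw n M))" by (simp add: dual_code_def)
qed

definition sig :: "nat \<Rightarrow> nat \<Rightarrow> nat" where
  "sig n i = (if i < n then n + rho n i else if i < 2*n then rho n (i-n) else i)"

lemma rho_lt': "0 < n \<Longrightarrow> rho n k < n" by (simp add: rho_def)

lemma sig_lt: "i < 2*n \<Longrightarrow> sig n i < 2*n"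
  using rho_lt'[of n "i-n"] rho_lt'[of n i] by (auto simp: sig_def)
lemma sig_sig: "sig n (sig n i) = i"
proof -
  consider "i < n" | "n \<le> i" "i < 2*n" | "2*n \<le> i" by linarith
  thus ?thesis
  proof cases
    case 1 thus ?thesis using rho_lt[of i n] by (simp add: sig_def rho_rho)
  next
    case 2
    hence "i - n < n" by simp
    thus ?thesis using 2 rho_lt[of "i-n" n] by (simp add: sig_def rho_rho)
  qed (simp add: sig_def)
qed

lemma sig_permutes: "sig n permutes {..<2*n}"
  by (rule bij_imp_permutes) (auto intro!: bij_betwI[where g="sig n"] simp: sig_lt sig_sig, auto simp: sig_def)

definition phi :: "nat \<Rightarrow> (nat \<Rightarrow> 'a::comm_ring_1 vring) \<Rightarrow> nat \<Rightarrow> 'a vring" where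
  "phi n c = (\<lambda>i. if i < 2*n then (if i < n then -1 else 1) * c (sig n i) else 0)"

lemma sig_half1: "i < n \<Longrightarrow> n \<le> sig n i \<and> sig n i < 2*n"
  using rho_lt'[of n] by (auto simp: sig_def)
lemma sig_half2: "n \<le> i \<Longrightarrow> i < 2*n \<Longrightarrow> sig n i < n"
  using rho_lt'[of n] by (auto simp: sig_def)

lemma phi_sq: "c \<in> vecs (2*n) \<Longrightarrow> phi n (phi n c) = (\<lambda>i. - c i)"
proof (rule ext)
  fix i assume c: "c \<in> vecs (2*n)"
  show "phi n (phi n c) i = - c i"
  proof (cases "i < n")
    case True thus ?thesis using sig_half1[OF True] by (simp add: phi_def sig_sig)
  next
    case False
    thus ?thesis using sig_half2[of n i] c by (auto simp: phi_def sig_sig vecs_def)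
  qed
qed

lemma phi_inj: "inj_on (phi n) (vecs (2*n))"
proof (rule inj_onI)
  fix c d assume "c \<in> vecs (2*n)" "d \<in> vecs (2*n)" "phi n c = phi n d"
  hence "(\<lambda>i. - c i) = (\<lambda>i. - d i)" using phi_sq by metis
  thus "c = d" by (simp add: fun_eq_iff)
qed

lemma c0_uminus[simp]: "c0 (- x) = - c0 x" and c1_uminus[simp]: "c1 (- x) = - c1 x"
  and c2_uminus[simp]: "c2 (- x) = - c2 x"
  by (simp_all add: uminus_vring_def)

lemma card_perm:
  assumes "s permutes {..<N}"
  shows "card {i. i < N \<and> Q (s i)} = card {j. j < N \<and> Q j}"
proof -
  have "{j. j < N \<and> Q j} = s ` {i. i < N \<and> Q (s i)}"
  proof (intro set_eqI iffI)
    fix j assume "j \<in> {j. j < N \<and> Q j}"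
    moreover have "s (inv s j) = j" using assms by (simp add: permutes_inverses)
    moreover have "inv s j < N" using calculation permutes_in_image[OF permutes_inv[OF assms], of j] by simp
    ultimately show "j \<in> s ` {i. i < N \<and> Q (s i)}" by (metis (mono_tags, lifting) image_eqI mem_Collect_eq)
  next
    fix j assume "j \<in> s ` {i. i < N \<and> Q (s i)}"
    thus "j \<in> {j. j < N \<and> Q j}" using permutes_in_image[OF assms] by auto
  qed
  moreover have "inj_on s {i. i < N \<and> Q (s i)}"
    using permutes_inj[OF assms] by (simp add: inj_on_def inj_def)
  ultimately show ?thesis by (simp add: card_image)
qed

lemma lee_phi: "lee_weight (2*n) (phi n c) = lee_weight (2*n) c"
proof -
  have e: "{i. i < 2*n \<and> P (phi n c i)} = {i. i < 2*n \<and> P (c (sig n i))}"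
    if "\<And>x. P (-x) = P x" for P :: "'a vring \<Rightarrow> bool"
    using that by (auto simp: phi_def)
  have 1: "{i. i < 2*n \<and> c0 (phi n c i) \<noteq> 0} = {i. i < 2*n \<and> c0 (c (sig n i)) \<noteq> 0}"
    by (rule e[where P="\<lambda>x. c0 x \<noteq> 0"]) simp
  have 2: "{i. i < 2*n \<and> c0 (phi n c i) + c2 (phi n c i) \<noteq> 0}
      = {i. i < 2*n \<and> c0 (c (sig n i)) + c2 (c (sig n i)) \<noteq> 0}"
    by (rule e[where P="\<lambda>x. c0 x + c2 x \<noteq> 0"]) (simp only: c0_uminus c2_uminus minus_add_distrib[symmetric] neg_equal_0_iff_equal)
  have 3: "{i. i < 2*n \<and> c1 (phi n c i) \<noteq> 0} = {i. i < 2*n \<and> c1 (c (sig n i)) \<noteq> 0}"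
    by (rule e[where P="\<lambda>x. c1 x \<noteq> 0"]) simp
  show ?thesis unfolding lee_weight_def 1 2 3
    by (simp add: card_perm[OF sig_permutes, where Q="\<lambda>x. c0 (c x) \<noteq> 0"]
        card_perm[OF sig_permutes, where Q="\<lambda>x. c0 (c x) + c2 (c x) \<noteq> 0"]
        card_perm[OF sig_permutes, where Q="\<lambda>x. c1 (c x) \<noteq> 0"])
qed

lemma phi_cw_lo: "i < n \<Longrightarrow> phi n (cw n M a) i = - (\<Sum>l<n. a l * M l (rho n i))"
  using rho_lt[of i n] by (simp add: phi_def cw_def sig_def)

lemma phi_cw_hi: "j < n \<Longrightarrow> phi n (cw n M a) (n+j) = a (rho n j)"
  using rho_lt[of j n] by (simp add: phi_def cw_def sig_def)

lemma key_sum: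
  fixes M :: "nat \<Rightarrow> nat \<Rightarrow> 'a::comm_ring_1"
  assumes "circulant n M" "k < n"
  shows "(\<Sum>j<n. M k j * f (rho n j)) = (\<Sum>l<n. f l * M l (rho n k))"
proof -
  have "(\<Sum>j<n. M k j * f (rho n j)) = (\<Sum>j<n. M k (rho n j) * f (rho n (rho n j)))"
    using sum_rho[of "\<lambda>j. M k j * f (rho n j)" n] by simp
  also have "\<dots> = (\<Sum>l<n. f l * M l (rho n k))"
  proof (rule sum.cong)
    fix x assume "x \<in> {..<n}"
    hence x: "x < n" by simp
    have "M x (rho n k) = M k (rho n x)" by (rule circ_sym[OF assms(1) x assms(2)])
    thus "M k (rho n x) * f (rho n (rho n x)) = f x * M x (rho n k)"
      using x by (simp add: rho_rho mult.commute)
  qed simp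
  finally show ?thesis .
qed

lemma phi_image:
  assumes "circulant n M"
  shows "phi n ` range (cw n M) = {y \<in> vecs (2*n). \<forall>k<n. y k + (\<Sum>j<n. M k j * y (n+j)) = 0}"
proof (intro set_eqI iffI)
  fix y assume "y \<in> phi n ` range (cw n M)"
  then obtain a where y: "y = phi n (cw n M a)" by auto
  have "y \<in> vecs (2*n)" by (simp add: y phi_def vecs_def)
  moreover have "y k + (\<Sum>j<n. M k j * y (n+j)) = 0" if k: "k < n" for k
  proof -
    have "(\<Sum>j<n. M k j * y (n+j)) = (\<Sum>j<n. M k j * a (rho n j))"
      by (rule sum.cong) (auto simp: y phi_cw_hi)
    also have "\<dots> = (\<Sum>l<n. a l * M l (rho n k))" by (rule key_sum[OF assms k])
    finally show ?thesis using k by (simp add: y phi_cw_lo)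
  qed
  ultimately show "y \<in> {y \<in> vecs (2*n). \<forall>k<n. y k + (\<Sum>j<n. M k j * y (n+j)) = 0}" by blast
next
  fix y assume "y \<in> {y \<in> vecs (2*n). \<forall>k<n. y k + (\<Sum>j<n. M k j * y (n+j)) = 0}"
  hence v: "y \<in> vecs (2*n)" and c: "\<And>k. k<n \<Longrightarrow> y k + (\<Sum>j<n. M k j * y (n+j)) = 0" by auto
  define a where "a = (\<lambda>l. y (n + rho n l))"
  have "y = phi n (cw n M a)"
  proof (rule ext)
    fix i
    consider "i < n" | "n \<le> i" "i < 2*n" | "2*n \<le> i" by linarith
    thus "y i = phi n (cw n M a) i"
    proof cases
      case 1
      have "(\<Sum>l<n. a l * M l (rho n i)) = (\<Sum>j<n. M i j * a (rho n j))"
        by (rule key_sum[OF assms 1, symmetric])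
      also have "\<dots> = (\<Sum>j<n. M i j * y (n+j))"
        by (rule sum.cong) (auto simp: a_def rho_rho)
      finally show ?thesis using c[OF 1] 1 by (simp add: phi_cw_lo eq_neg_iff_add_eq_0)
    next
      case 2
      hence "i - n < n" by simp
      hence "phi n (cw n M a) (n + (i - n)) = y (n + (i - n))"
        by (simp add: phi_cw_hi a_def rho_rho)
      thus ?thesis using 2 by simp
    next
      case 3 thus ?thesis using v by (simp add: phi_def vecs_def)
    qed
  qed
  thus "y \<in> phi n ` range (cw n M)" by blast
qed

lemma cw_vecs: "cw n M a \<in> vecs (2*n)"
  by (simp add: cw_def vecs_def)

lemma lin_code: "linear_code (2*n) (range (cw n M))"
proof -
  have add: "(\<lambda>i. cw n M a i + cw n M b i) = cw n M (\<lambda>i. a i + b i)" for a b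
    by (rule ext) (simp add: cw_def distrib_right sum.distrib)
  have sc: "(\<lambda>i. r * cw n M a i) = cw n M (\<lambda>i. r * a i)" for r a
    by (rule ext) (simp add: cw_def sum_distrib_left mult.assoc)
  have z: "(\<lambda>i. 0) = cw n M (\<lambda>i. 0)"
    by (rule ext) (simp add: cw_def)
  have "range (cw n M) \<subseteq> vecs (2*n)" using cw_vecs by blast
  moreover have "(\<lambda>i. 0) \<in> range (cw n M)" by (subst z) (rule rangeI)
  moreover have "\<forall>x\<in>range (cw n M). \<forall>y\<in>range (cw n M). (\<lambda>i. x i + y i) \<in> range (cw n M)"
    using add by auto
  moreover have "\<forall>r. \<forall>x\<in>range (cw n M). (\<lambda>i. r * x i) \<in> range (cw n M)"
    using sc by auto
  ultimately show ?thesis unfolding linear_code_def by blast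
qed

theorem theorem15:
  fixes M :: "nat \<Rightarrow> nat \<Rightarrow> ('a::{field,finite}) vring" and n :: nat
  assumes "circulant n M"
  shows "isodual (2 * n) (gen_code n (2 * n) (id_aug n M))
       \<and> formally_self_dual (2 * n) (gen_code n (2 * n) (id_aug n M))"
proof -
  let ?C = "range (cw n M)"
  have D: "dual_code (2*n) ?C = phi n ` ?C"
    by (simp add: dual_char phi_image[OF assms])
  have eqv: "equiv_codes (2*n) ?C (dual_code (2*n) ?C)"
    unfolding equiv_codes_def D
  proof (intro exI conjI)
    show "sig n permutes {..<2*n}" by (rule sig_permutes)
    show "\<forall>i<2*n. (\<lambda>i. if i < n then -1 else 1 :: 'a vring) i dvd 1" by auto
    show "phi n ` ?C = (\<lambda>c i. if i < 2*n then (\<lambda>i. if i < n then -1 else 1) i * c (sig n i) else 0) ` ?C"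
      by (simp add: phi_def)
  qed
  have fsd: "formally_self_dual (2*n) ?C"
    unfolding formally_self_dual_def
  proof
    fix w
    have "{c \<in> dual_code (2*n) ?C. lee_weight (2*n) c = w} = phi n ` {c \<in> ?C. lee_weight (2*n) c = w}"
      unfolding D by (auto simp: lee_phi)
    moreover have "inj_on (phi n) {c \<in> ?C. lee_weight (2*n) c = w}"
      by (rule inj_on_subset[OF phi_inj]) (auto simp: cw_vecs)
    ultimately show "card {c \<in> ?C. lee_weight (2*n) c = w} = card {c \<in> dual_code (2*n) ?C. lee_weight (2*n) c = w}"
      by (simp add: card_image)
  qed
  show ?thesis unfolding gen_eq isodual_def using lin_code eqv fsd by blast
qed

end
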